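(* Let $K$ be a finite field of characteristic $p$ and order $q$, let $s$ be a positive integer with $\gcd(s,q-1)=1$, and let $W=\sum_{u\in K^\times}W_u[u]\in L[K^\times]$. Then $|W|=q$ and $W\overline{W}=q^2[1]$. Equivalently, $\sum_{u\in K^\times}W_u=q$, and for every $c\in K^\times$, $\sum_{y\in K^\times}W_{cy}\overline{W_y}$ equals $q^2$ if $c=1$ and $0$ otherwise.
   Context: $\zeta=\exp(2\pi i/p)$, $\psi(x)=\zeta^{\mathrm{Tr}(x)}$ with $\mathrm{Tr}$ the absolute trace of $K$ to $\mathbb{F}_p$; $W_u=\sum_{x\in K}\psi(x^s-ux)$. $L=\mathbb{Q}(\zeta,\xi)$ with $\xi=\exp(2\pi i/(q-1))$, and $L[K^\times]$ is the group algebra of the multiplicative group $K^\times$ over $L$, whose elements are written $S=\sum_{u\in K^\times}S_u[u]$. For such $S$, $\overline{S}=\sum_{u}\overline{S_u}[u^{-1}]$ and $|S|=\sum_u S_u$. *)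

theory Defs
  imports "HOL-Analysis.Analysis"
begin

text \<open>K is modelled as a finite field type 'a. Its characteristic is CHAR('a) = p,
  its order CARD('a) = q = p^n.\<close>

definition ff_degree :: "'a::{field,finite} itself \<Rightarrow> nat" where
  "ff_degree _ = (THE n. CARD('a) = CHAR('a) ^ n)"

text \<open>Absolute trace K \<rightarrow> F_p (as an element of K, lying in the prime field).\<close>
definition abs_trace :: "'a::{field,finite} \<Rightarrow> 'a" where
  "abs_trace x = (\<Sum>i<ff_degree TYPE('a). x ^ (CHAR('a) ^ i))"

definition abs_trace_nat :: "'a::{field,finite} \<Rightarrow> nat" where
  "abs_trace_nat x = (THE k. k < CHAR('a) \<and> of_nat k = abs_trace x)"

definition psi :: "'a::{field,finite} \<Rightarrow> complex" where
  "psi x = exp (2 * pi * \<i> / of_nat CHAR('a)) ^ abs_trace_nat x"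

definition W :: "nat \<Rightarrow> 'a::{field,finite} \<Rightarrow> complex" where
  "W s u = (\<Sum>x\<in>UNIV. psi (x ^ s - u * x))"

end

theory Submission imports Defs "HOL-Algebra.Sylow" "HOL-Algebra.Multiplicative_Group" "HOL-Computational_Algebra.Primes" "HOL-Computational_Algebra.Polynomial" "HOL-Number_Theory.Cong"
begin

lemma ff_prime_char: "prime CHAR('a::{field,finite})"
  by (intro prime_CHAR_semidom finite_imp_CHAR_pos) simp

definition addgrp :: "'a::{field,finite} itself \<Rightarrow> 'a monoid" where
  "addgrp _ = \<lparr>carrier = UNIV, monoid.mult = (+), one = 0\<rparr>"

lemma addgrp_group: "group (addgrp TYPE('a::{field,finite}))"
  unfolding addgrp_def by (rule groupI) (simp_all add: add.assoc, metis add.left_inverse)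

lemma addgrp_pow: "x [^]\<^bsub>addgrp TYPE('a::{field,finite})\<^esub> (k::nat) = of_nat k * x"
  by (induction k) (auto simp: addgrp_def algebra_simps)

lemma addgrp_pow': "x [^]\<^bsub>\<lparr>carrier = H, monoid.mult = (+), one = (0::'a::{field,finite})\<rparr>\<^esub> (k::nat) = of_nat k * x"
  by (induction k) (auto simp: addgrp_def algebra_simps)

lemma prime_dvd_card_eq_char:
  assumes "prime r" "r dvd CARD('a::{field,finite})"
  shows "r = CHAR('a)"
proof -
  let ?G = "addgrp TYPE('a)"
  obtain m where m: "CARD('a) = r ^ 1 * m" using assms by auto
  have "order ?G = r ^ 1 * m" using m by (simp add: order_def addgrp_def)
  then obtain H where H: "subgroup H ?G" "card H = r ^ 1"
    using sylow_thm[OF assms(1) addgrp_group, of 1 m] by (auto simp: addgrp_def)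
  have gH: "group (?G\<lparr>carrier := H\<rparr>)"
    using subgroup.subgroup_is_group[OF H(1) addgrp_group] .
  have "card H > 1" using H(2) prime_gt_1_nat[OF assms(1)] by simp
  have "\<not> H \<subseteq> {0}"
  proof
    assume "H \<subseteq> {0}"
    then have "card H \<le> card {0::'a}" by (rule card_mono[rotated]) simp
    thus False using \<open>card H > 1\<close> by simp
  qed
  then obtain x where x: "x \<in> H" "x \<noteq> 0" by blast
  have "x [^]\<^bsub>?G\<lparr>carrier := H\<rparr>\<^esub> order (?G\<lparr>carrier := H\<rparr>) = \<one>\<^bsub>?G\<lparr>carrier := H\<rparr>\<^esub>"
    using group.pow_order_eq_1[OF gH] x by simp
  hence "of_nat r * x = 0" using H(2) by (simp add: addgrp_pow' order_def addgrp_def)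
  hence "of_nat r = (0::'a)" using x by simp
  hence "CHAR('a) dvd r" by (simp add: of_nat_eq_0_iff_char_dvd)
  thus ?thesis using assms(1) ff_prime_char[where 'a='a]
    by (metis prime_nat_iff prime_gt_1_nat nat_neq_iff)
qed

lemma card_char_power: "\<exists>n. CARD('a::{field,finite}) = CHAR('a) ^ n"
proof -
  let ?p = "CHAR('a)" and ?q = "CARD('a)"
  obtain y where y: "?q = ?p ^ multiplicity ?p ?q * y" "\<not> ?p dvd y"
  proof -
    have h1: "CARD('a) \<noteq> 0" by simp
    have h2: "\<not> is_unit CHAR('a)" using ff_prime_char[where 'a='a] by (simp add: prime_nat_iff)
    show ?thesis by (rule multiplicity_decompose'[OF h1 h2]) (rule that)
  qed
  have "y = 1"
  proof (rule ccontr)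
    assume "y \<noteq> 1"
    moreover have "y \<noteq> 0" using y finite_UNIV_card_ge_0[where 'a='a] by (metis finite mult_0_right less_irrefl)
    ultimately obtain r where r: "prime r" "r dvd y"
      using prime_factor_nat by blast
    hence "r dvd ?q" by (subst y(1)) (rule dvd_mult[OF r(2)])
    hence "r = ?p" using prime_dvd_card_eq_char r(1) by blast
    thus False using r y by simp
  qed
  thus ?thesis using y by auto
qed

lemma ff_card_ge2: "CARD('a::{field,finite}) \<ge> 2"
proof -
  have "card {0::'a, 1} \<le> CARD('a)" by (rule card_mono) auto
  thus ?thesis by simp
qed

lemma ff_degree: "CARD('a::{field,finite}) = CHAR('a) ^ ff_degree TYPE('a)"
proof -
  obtain n where n: "CARD('a) = CHAR('a) ^ n" using card_char_power by blast
  have p1: "CHAR('a) > 1" using prime_gt_1_nat[OF ff_prime_char] .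
  have "ff_degree TYPE('a) = n"
    unfolding ff_degree_def
    by (rule the_equality) (use n p1 in auto)
  thus ?thesis using n by simp
qed

lemma ff_degree_pos: "ff_degree TYPE('a::{field,finite}) > 0"
  using ff_degree[where 'a='a] ff_card_ge2[where 'a='a] by (metis gr0I power_0 numeral_le_one_iff semiring_norm(69))

lemma ff_pow_card: "(x::'a::{field,finite}) ^ CARD('a) = x"
proof (cases "x = 0")
  case False
  have "x * (\<Prod>y\<in>UNIV-{0}. x * y) = x * x ^ (card (UNIV :: 'a set) - 1) * \<Prod>(UNIV-{0})"
    by (simp add: prod.distrib mult_ac)
  also have "x * x ^ (card (UNIV :: 'a set) - 1) = x ^ Suc (card (UNIV :: 'a set) - 1)"
    by (subst power_Suc) auto
  also have "Suc (card (UNIV :: 'a set) - 1) = card (UNIV :: 'a set)"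
    using finite_UNIV_card_ge_0[where ?'a = 'a] by simp
  also have "(\<Prod>y\<in>UNIV-{0}. x * y) = (\<Prod>y\<in>UNIV-{0}. y)"
    by (rule prod.reindex_bij_witness[of _ "\<lambda>y. y / x" "\<lambda>y. x * y"]) (use False in auto)
  finally show ?thesis
    by simp
qed (use finite_UNIV_card_ge_0[where ?'a = 'a] in auto)

lemma ff_pow_card_m1: "(x::'a::{field,finite}) \<noteq> 0 \<Longrightarrow> x ^ (CARD('a) - 1) = 1"
proof -
  assume x: "x \<noteq> 0"
  have "x * x ^ (CARD('a) - 1) = x * 1"
    using ff_pow_card[of x] ff_card_ge2[where 'a='a]
    by (metis mult.right_neutral power_Suc Suc_diff_1 less_le_trans zero_less_numeral)
  thus ?thesis using x by simp
qed

lemma ff_pow_pn: "(x::'a::{field,finite}) ^ (CHAR('a) ^ ff_degree TYPE('a)) = x"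
  using ff_pow_card[of x] ff_degree[where 'a='a] by simp

lemma trace_add: "abs_trace (x + y :: 'a::{field,finite}) = abs_trace x + abs_trace y"
  unfolding abs_trace_def
  by (simp add: sum.distrib freshmans_dream'[OF ff_prime_char refl])

lemma trace_zero: "abs_trace (0 :: 'a::{field,finite}) = 0"
  unfolding abs_trace_def using prime_gt_0_nat[OF ff_prime_char[where 'a='a]] by (simp add: power_0_left)

lemma trace_pow_p: "abs_trace (x :: 'a::{field,finite}) ^ CHAR('a) = abs_trace x"
proof -
  let ?p = "CHAR('a)" and ?n = "ff_degree TYPE('a)"
  define f where "f = (\<lambda>i. x ^ (?p ^ i))"
  have "abs_trace x ^ ?p = (\<Sum>i<?n. f i ^ ?p)"
    unfolding abs_trace_def f_def by (rule freshmans_dream_sum[OF ff_prime_char refl])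
  also have "\<dots> = (\<Sum>i<?n. f (Suc i))"
    by (simp add: f_def power_mult[symmetric] mult.commute)
  also have "\<dots> = (\<Sum>i<?n. f i)"
  proof -
    have "(\<Sum>i<Suc ?n. f i) = f 0 + (\<Sum>i<?n. f (Suc i))" by (rule sum.lessThan_Suc_shift)
    moreover have "(\<Sum>i<Suc ?n. f i) = (\<Sum>i<?n. f i) + f ?n" by simp
    moreover have "f ?n = f 0" using ff_pow_pn[of x] by (simp add: f_def)
    ultimately show ?thesis by (simp add: add.commute)
  qed
  finally show ?thesis by (simp add: abs_trace_def f_def)
qed

lemma of_nat_pow_char: "(of_nat k :: 'a::{field,finite}) ^ CHAR('a) = of_nat k"
proof (induction k)
  case 0 thus ?case using ff_prime_char[where 'a='a] by (simp add: prime_gt_0_nat)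
next
  case (Suc k)
  have "(of_nat (Suc k) :: 'a) ^ CHAR('a) = (of_nat k + 1) ^ CHAR('a)" by (simp add: add.commute)
  also have "\<dots> = of_nat k ^ CHAR('a) + 1 ^ CHAR('a)"
    by (rule freshmans_dream[OF ff_prime_char refl])
  finally show ?case using Suc by simp
qed

lemma of_nat_inj_char:
  assumes "i < CHAR('a::{field,finite})" "j < CHAR('a)" "(of_nat i :: 'a) = of_nat j"
  shows "i = j"
  using assms of_nat_eq_iff_cong_CHAR[of i j] cong_less_modulus_unique_nat by blast

lemma prime_field_elem:
  assumes "(t :: 'a::{field,finite}) ^ CHAR('a) = t"
  shows "\<exists>k<CHAR('a). of_nat k = t"
proof -
  let ?p = "CHAR('a)"
  define P :: "'a poly" where "P = Polynomial.monom 1 ?p - [:0, 1:]"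
  have p2: "?p \<ge> 2" using prime_ge_2_nat[OF ff_prime_char] .
  have degP: "degree P = ?p"
    unfolding P_def diff_conv_add_uminus using p2 by (subst degree_add_eq_left) (auto simp: degree_monom_eq)
  hence "P \<noteq> 0" using p2 by auto
  hence bound: "card {x. poly P x = 0} \<le> ?p" using card_poly_roots_bound degP by metis
  have roots: "{x. poly P x = 0} = {x. x ^ ?p = x}"
    by (auto simp: P_def poly_monom)
  have sub: "of_nat ` {..<?p} \<subseteq> {x. poly P x = 0}"
    using of_nat_pow_char roots by auto
  have inj: "inj_on (of_nat :: nat \<Rightarrow> 'a) {..<?p}"
    by (rule inj_onI) (use of_nat_inj_char in auto)
  have "card (of_nat ` {..<?p} :: 'a set) = ?p"
    using card_image[OF inj] by simp
  have "of_nat ` {..<?p} = {x. poly P x = (0::'a)}"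
  proof (rule card_subset_eq)
    show "finite {x. poly P x = (0::'a)}" by simp
    show "of_nat ` {..<?p} \<subseteq> {x. poly P x = (0::'a)}" by (rule sub)
    have "card (of_nat ` {..<?p} :: 'a set) \<le> card {x. poly P x = (0::'a)}"
      by (rule card_mono[OF _ sub]) simp
    thus "card (of_nat ` {..<?p} :: 'a set) = card {x. poly P x = (0::'a)}"
      using bound \<open>card (of_nat ` {..<?p} :: 'a set) = ?p\<close> by linarith
  qed
  moreover have "t \<in> {x. poly P x = 0}" using roots assms by auto
  ultimately have "t \<in> of_nat ` {..<?p}" by simp
  thus ?thesis by auto
qed

lemma trace_nat:
  "abs_trace_nat (x::'a::{field,finite}) < CHAR('a) \<and> of_nat (abs_trace_nat x) = abs_trace x"
proof -
  obtain k where k: "k < CHAR('a)" "of_nat k = abs_trace x"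
    using prime_field_elem[OF trace_pow_p] by blast
  have "abs_trace_nat x = k"
    unfolding abs_trace_nat_def
    by (rule the_equality) (use k of_nat_inj_char[where 'a='a] in auto)
  thus ?thesis using k by simp
qed

definition zeta :: "'a::{field,finite} itself \<Rightarrow> complex" where
  "zeta _ = exp (2 * pi * \<i> / of_nat CHAR('a))"

lemma psi_zeta: "psi (x::'a::{field,finite}) = zeta TYPE('a) ^ abs_trace_nat x"
  by (simp add: psi_def zeta_def)

lemma zeta_pow_char: "zeta TYPE('a::{field,finite}) ^ CHAR('a) = 1"
proof -
  have p0: "CHAR('a) > 0" using prime_gt_0_nat[OF ff_prime_char] .
  have "zeta TYPE('a) ^ CHAR('a) = exp (of_nat CHAR('a) * (2 * pi * \<i> / of_nat CHAR('a)))"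
    by (simp only: zeta_def exp_of_nat_mult)
  also have "\<dots> = exp (2 * pi * \<i>)" using p0 by simp
  also have "\<dots> = 1" by simp
  finally show ?thesis .
qed

lemma zeta_pow_mod: "zeta TYPE('a::{field,finite}) ^ k = zeta TYPE('a) ^ (k mod CHAR('a))"
proof -
  have "zeta TYPE('a) ^ k = zeta TYPE('a) ^ (CHAR('a) * (k div CHAR('a)) + k mod CHAR('a))"
    by simp
  also have "\<dots> = zeta TYPE('a) ^ (k mod CHAR('a))"
    by (simp only: power_add power_mult zeta_pow_char) simp
  finally show ?thesis .
qed

lemma zeta_pow_ne1:
  assumes "0 < k" "k < CHAR('a::{field,finite})"
  shows "zeta TYPE('a) ^ k \<noteq> 1"
proof
  let ?p = "CHAR('a)"
  assume "zeta TYPE('a) ^ k = 1"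
  hence "exp (of_nat k * (2 * pi * \<i> / of_nat ?p)) = 1"
    by (simp only: zeta_def exp_of_nat_mult)
  then obtain n :: int where n: "Im (of_nat k * (2 * pi * \<i> / of_nat ?p)) = of_int (2 * n) * pi"
    unfolding exp_eq_1 by blast
  have "real k * (2 * pi) / real ?p = of_int (2 * n) * pi" using n by simp
  hence "real k = real_of_int n * real ?p" using assms by (simp add: field_simps)
  hence "int k = n * int ?p" by (metis of_int_eq_iff of_int_mult of_int_of_nat_eq)
  hence "int ?p dvd int k" by simp
  hence "?p dvd k" by simp
  thus False using assms by (meson nat_dvd_not_less)
qed

lemma psi_zero: "psi (0::'a::{field,finite}) = 1"
proof -
  have "abs_trace_nat (0::'a) = 0"
    using trace_nat[of "0::'a"] of_nat_inj_char[where 'a='a, of "abs_trace_nat (0::'a)" 0]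
    by (simp add: trace_zero prime_gt_0_nat[OF ff_prime_char])
  thus ?thesis by (simp add: psi_zeta)
qed

lemma psi_add: "psi (x + y :: 'a::{field,finite}) = psi x * psi y"
proof -
  let ?t = "abs_trace_nat :: 'a \<Rightarrow> nat"
  have "(of_nat (?t (x + y)) :: 'a) = of_nat (?t x + ?t y)"
    using trace_nat[of "x+y"] trace_nat[of x] trace_nat[of y] by (simp add: trace_add)
  hence "[?t (x + y) = ?t x + ?t y] (mod CHAR('a))"
    by (simp only: of_nat_eq_iff_cong_CHAR)
  hence "?t (x + y) mod CHAR('a) = (?t x + ?t y) mod CHAR('a)"
    by (simp only: cong_def)
  hence "zeta TYPE('a) ^ ?t (x + y) = zeta TYPE('a) ^ (?t x + ?t y)"
    by (metis zeta_pow_mod)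
  thus ?thesis by (simp add: psi_zeta power_add)
qed

lemma norm_psi: "norm (psi (x::'a::{field,finite})) = 1"
proof -
  have "norm (zeta TYPE('a)) = 1" unfolding zeta_def by (simp add: norm_exp)
  thus ?thesis by (simp add: psi_zeta norm_power)
qed

lemma cnj_psi: "cnj (psi (x::'a::{field,finite})) = psi (- x)"
proof -
  have "psi x * psi (- x) = 1" using psi_add[of x "-x"] by (simp add: psi_zero)
  moreover have "psi x * cnj (psi x) = 1"
    using norm_psi[of x] by (simp add: complex_norm_square[symmetric])
  ultimately show ?thesis by (metis mult.left_commute mult.right_neutral mult.commute)
qed

lemma trace_nonzero: "\<exists>x::'a::{field,finite}. abs_trace x \<noteq> 0"
proof (rule ccontr)
  let ?p = "CHAR('a)" and ?n = "ff_degree TYPE('a)"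
  assume "\<not> ?thesis"
  hence all0: "\<And>x::'a. abs_trace x = 0" by blast
  define Q :: "'a poly" where "Q = (\<Sum>i<?n. Polynomial.monom 1 (?p ^ i))"
  have p1: "?p > 1" using prime_gt_1_nat[OF ff_prime_char] .
  have n0: "?n > 0" by (rule ff_degree_pos)
  have "Polynomial.coeff Q (?p ^ (?n - 1)) = (\<Sum>i<?n. if ?p ^ i = ?p ^ (?n - 1) then 1 else 0)"
    by (simp add: Q_def coeff_sum coeff_monom)
  also have "\<dots> = (\<Sum>i\<in>{?n - 1}. 1)"
    using p1 n0 by (intro sum.mono_neutral_cong_right) auto
  finally have "Polynomial.coeff Q (?p ^ (?n - 1)) = 1" by simp
  hence Q0: "Q \<noteq> 0" by auto
  have "degree Q \<le> ?p ^ (?n - 1)"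
    unfolding Q_def
  proof (rule degree_sum_le)
    fix i assume "i \<in> {..<?n}"
    hence "?p ^ i \<le> ?p ^ (?n - 1)" using p1 by (intro power_increasing) auto
    thus "degree (Polynomial.monom (1::'a) (?p ^ i)) \<le> ?p ^ (?n - 1)"
      using degree_monom_le le_trans by blast
  qed simp
  moreover have "{x. poly Q x = 0} = UNIV"
    using all0 by (auto simp: Q_def poly_sum poly_monom abs_trace_def)
  ultimately have "CARD('a) \<le> ?p ^ (?n - 1)"
    using card_poly_roots_bound[OF Q0] by simp
  moreover have "?p ^ (?n - 1) < ?p ^ ?n" using p1 n0 by (intro power_strict_increasing) auto
  ultimately show False using ff_degree[where 'a='a] by simp
qed

lemma psi_nontrivial: "\<exists>x::'a::{field,finite}. psi x \<noteq> 1"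
proof -
  obtain x :: 'a where x: "abs_trace x \<noteq> 0" using trace_nonzero by blast
  have "abs_trace_nat x \<noteq> 0" using x trace_nat[of x] by (metis of_nat_0)
  hence "psi x \<noteq> 1" using trace_nat[of x] zeta_pow_ne1[where 'a='a, of "abs_trace_nat x"] by (simp add: psi_zeta)
  thus ?thesis by blast
qed

lemma psi_sum: "(\<Sum>x\<in>UNIV. psi (x::'a::{field,finite})) = 0"
proof -
  obtain x0 :: 'a where x0: "psi x0 \<noteq> 1" using psi_nontrivial by blast
  have b: "bij_betw (\<lambda>x. x + x0) UNIV UNIV"
    by (rule bij_betw_byWitness[where f'="\<lambda>x. x - x0"]) auto
  have "(\<Sum>x\<in>UNIV. psi (x::'a)) = (\<Sum>x\<in>UNIV. psi (x + x0))"
    using sum.reindex_bij_betw[OF b, of psi] by simp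
  also have "\<dots> = psi x0 * (\<Sum>x\<in>UNIV. psi (x::'a))"
    by (simp add: psi_add sum_distrib_left mult.commute[of "psi x0"])
  finally have "(1 - psi x0) * (\<Sum>x\<in>UNIV. psi (x::'a)) = 0" by (simp add: algebra_simps)
  thus ?thesis using x0 by simp
qed

lemma psi_sum_mult: "(\<Sum>x\<in>UNIV. psi (a * x :: 'a::{field,finite})) = (if a = 0 then of_nat CARD('a) else 0)"
proof (cases "a = 0")
  case True thus ?thesis by (simp add: psi_zero)
next
  case False
  have b: "bij_betw (\<lambda>x. a * x) UNIV UNIV"
    by (rule bij_betw_byWitness[where f'="\<lambda>x. x / a"]) (use False in auto)
  have "(\<Sum>x\<in>UNIV. psi (a * x)) = (\<Sum>x\<in>UNIV. psi (x::'a))"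
    using sum.reindex_bij_betw[OF b, of psi] by simp
  thus ?thesis using False psi_sum by simp
qed

lemma pow_inv:
  assumes "s > 0" "coprime s (CARD('a::{field,finite}) - 1)"
  shows "\<exists>v. \<forall>x::'a. (x ^ s) ^ v = x"
proof -
  let ?q1 = "CARD('a) - 1"
  have q1: "?q1 > 0" using ff_card_ge2[where 'a='a] by simp
  obtain u where u: "[s * u = Suc 0] (mod ?q1)" using cong_solve_coprime_nat[OF assms(2)] by blast
  define m where "m = s * (u + ?q1)"
  have meq: "m = s * u + s * ?q1" unfolding m_def by (simp only: distrib_left)
  have "[m = s * u] (mod ?q1)"
    unfolding meq cong_def by (rule mod_mult_self1)
  hence m1: "[m = 1] (mod ?q1)" using u by (metis cong_trans One_nat_def)
  have mpos: "m \<ge> 1" unfolding m_def using assms(1) q1 by simp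
  then obtain k where k: "m - 1 = ?q1 * k" using m1 cong_altdef_nat by (metis dvdE)
  have m: "m = Suc (?q1 * k)" using k mpos by simp
  have "\<forall>x::'a. (x ^ s) ^ (u + ?q1) = x"
  proof
    fix x :: 'a
    have "(x ^ s) ^ (u + ?q1) = x ^ m" by (simp add: m_def power_mult)
    also have "\<dots> = x"
    proof (cases "x = 0")
      case True thus ?thesis by (simp add: m)
    next
      case False
      have "x ^ m = x * (x ^ ?q1) ^ k" by (simp add: m power_mult)
      thus ?thesis using ff_pow_card_m1[OF False] by simp
    qed
    finally show "(x ^ s) ^ (u + ?q1) = x" .
  qed
  thus ?thesis by blast
qed

lemma pow_bij:
  assumes "s > 0" "coprime s (CARD('a::{field,finite}) - 1)"
  shows "bij (\<lambda>x::'a. x ^ s)"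
proof -
  obtain v where v: "\<And>x::'a. (x ^ s) ^ v = x" using pow_inv[OF assms] by blast
  have "inj (\<lambda>x::'a. x ^ s)"
    by (rule injI) (metis v)
  thus ?thesis by (simp add: bij_def finite_UNIV_inj_surj)
qed

lemma sum_pow_reindex:
  assumes "s > 0" "coprime s (CARD('a::{field,finite}) - 1)"
  shows "(\<Sum>x\<in>UNIV. f ((x::'a) ^ s)) = (\<Sum>x\<in>UNIV. f x)"
  using sum.reindex_bij_betw[OF pow_bij[OF assms], of f] by simp

lemma psi_sum_nz:
  "(\<Sum>y\<in>UNIV - {0}. psi (a * y :: 'a::{field,finite})) = (if a = 0 then of_nat CARD('a) else 0) - 1"
proof -
  have "(\<Sum>y\<in>UNIV. psi (a * y :: 'a)) = psi (a * 0) + (\<Sum>y\<in>UNIV - {0}. psi (a * y))"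
    by (rule sum.remove) auto
  thus ?thesis using psi_sum_mult[of a] by (simp add: psi_zero)
qed

theorem lemma5p8:
  fixes s :: nat
  assumes "s > 0"
    and "coprime s (CARD('a::{field,finite}) - 1)"
  shows "(\<Sum>u\<in>UNIV - {0::'a}. W s u) = of_nat CARD('a)
       \<and> (\<forall>c::'a. c \<noteq> 0 \<longrightarrow>
            (\<Sum>y\<in>UNIV - {0::'a}. W s (c * y) * cnj (W s y))
              = (if c = 1 then of_nat (CARD('a) ^ 2) else 0))"
proof
  let ?q = "of_nat CARD('a) :: complex"
  have S0: "(\<Sum>x\<in>UNIV. psi ((x::'a) ^ s)) = 0"
    using sum_pow_reindex[OF assms, of psi] psi_sum by simp
  have W0: "W s (0::'a) = 0" unfolding W_def using S0 by simp
  have "(\<Sum>u\<in>UNIV. W s (u::'a)) = (\<Sum>u\<in>UNIV. \<Sum>x\<in>UNIV. psi ((x::'a) ^ s) * psi ((- x) * u))"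
    unfolding W_def
  proof (intro sum.cong refl)
    fix u x :: 'a
    have "x ^ s - u * x = x ^ s + (- x) * u" by (simp add: algebra_simps)
    thus "psi (x ^ s - u * x) = psi (x ^ s) * psi (- x * u)" by (metis psi_add)
  qed
  also have "\<dots> = (\<Sum>x\<in>UNIV. psi ((x::'a) ^ s) * (\<Sum>u\<in>UNIV. psi ((- x) * u)))"
    by (subst sum.swap) (simp add: sum_distrib_left)
  also have "\<dots> = (\<Sum>x\<in>UNIV. if x = 0 then psi ((x::'a) ^ s) * ?q else 0)"
    by (intro sum.cong refl) (subst psi_sum_mult, use assms(1) in \<open>simp add: psi_zero\<close>)
  also have "\<dots> = ?q" using assms(1) by (simp add: psi_zero power_0_left)
  finally have Sall: "(\<Sum>u\<in>UNIV. W s (u::'a)) = ?q" .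
  have "(\<Sum>u\<in>UNIV. W s (u::'a)) = W s (0::'a) + (\<Sum>u\<in>UNIV - {0::'a}. W s u)"
    by (rule sum.remove) auto
  thus "(\<Sum>u\<in>UNIV - {0::'a}. W s u) = ?q" using Sall W0 by simp
next
  let ?q = "of_nat CARD('a) :: complex"
  have S0: "(\<Sum>x\<in>UNIV. psi ((x::'a) ^ s)) = 0"
    using sum_pow_reindex[OF assms, of psi] psi_sum by simp
  show "\<forall>c::'a. c \<noteq> 0 \<longrightarrow>
            (\<Sum>y\<in>UNIV - {0::'a}. W s (c * y) * cnj (W s y))
              = (if c = 1 then of_nat (CARD('a) ^ 2) else 0)"
  proof (intro allI impI)
    fix c :: 'a
    assume c: "c \<noteq> 0"
    define B where "B = (\<lambda>x z::'a. psi (x ^ s - z ^ s))"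
    have A: "W s (c * y) * cnj (W s y) = (\<Sum>x\<in>UNIV. \<Sum>z\<in>UNIV. B x z * psi ((z - c * x) * y))" for y
    proof -
      have "W s (c * y) * cnj (W s y) =
          (\<Sum>x\<in>UNIV. psi (x ^ s - c * y * x)) * (\<Sum>z\<in>UNIV. psi (- (z ^ s - y * z)))"
        unfolding W_def by (simp add: cnj_sum cnj_psi)
      also have "\<dots> = (\<Sum>x\<in>UNIV. \<Sum>z\<in>UNIV. psi (x ^ s - c * y * x) * psi (- (z ^ s - y * z)))"
        by (rule sum_product)
      also have "\<dots> = (\<Sum>x\<in>UNIV. \<Sum>z\<in>UNIV. B x z * psi ((z - c * x) * y))"
      proof (intro sum.cong refl)
        fix x z :: 'a
        have "x ^ s - c * y * x + - (z ^ s - y * z) = (x ^ s - z ^ s) + (z - c * x) * y"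
          by (simp add: algebra_simps)
        thus "psi (x ^ s - c * y * x) * psi (- (z ^ s - y * z)) = B x z * psi ((z - c * x) * y)"
          unfolding B_def by (metis psi_add)
      qed
      finally show ?thesis .
    qed
    have "(\<Sum>y\<in>UNIV - {0}. W s (c * y) * cnj (W s y))
        = (\<Sum>y\<in>UNIV - {0}. \<Sum>x\<in>UNIV. \<Sum>z\<in>UNIV. B x z * psi ((z - c * x) * y))"
      using A by simp
    also have "\<dots> = (\<Sum>x\<in>UNIV. \<Sum>y\<in>UNIV - {0}. \<Sum>z\<in>UNIV. B x z * psi ((z - c * x) * y))"
      by (rule sum.swap)
    also have "\<dots> = (\<Sum>x\<in>UNIV. \<Sum>z\<in>UNIV. \<Sum>y\<in>UNIV - {0}. B x z * psi ((z - c * x) * y))"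
      by (rule sum.cong[OF refl]) (rule sum.swap)
    also have "\<dots> = (\<Sum>x\<in>UNIV. \<Sum>z\<in>UNIV. B x z * ((if z = c * x then ?q else 0) - 1))"
      by (intro sum.cong refl) (simp add: sum_distrib_left[symmetric] psi_sum_nz)
    also have "\<dots> = (\<Sum>x\<in>UNIV. \<Sum>z\<in>UNIV. (if z = c * x then B x z * ?q else 0) - B x z)"
      by (intro sum.cong refl) (auto simp: algebra_simps)
    also have "\<dots> = (\<Sum>x\<in>UNIV. \<Sum>z\<in>UNIV. (if z = c * x then B x z * ?q else 0))
                   - (\<Sum>x\<in>UNIV. \<Sum>z\<in>UNIV. B x z)"
      by (simp only: sum_subtractf)
    also have "(\<Sum>x\<in>UNIV. \<Sum>z\<in>UNIV. B x z) = 0"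
    proof -
      have "(\<Sum>x\<in>UNIV. \<Sum>z\<in>UNIV. B x z) = (\<Sum>x\<in>UNIV. psi ((x::'a) ^ s)) * (\<Sum>z\<in>UNIV. psi (- ((z::'a) ^ s)))"
        unfolding B_def sum_product by (intro sum.cong refl) (simp add: psi_add[symmetric])
      thus ?thesis using S0 by simp
    qed
    also have "(\<Sum>x\<in>UNIV. \<Sum>z\<in>UNIV. (if z = c * x then B x z * ?q else 0)) = (\<Sum>x\<in>UNIV. B x (c * x) * ?q)"
      by (intro sum.cong refl) (simp add: sum.delta)
    also have "\<dots> = ?q * (\<Sum>x\<in>UNIV. psi ((1 - c ^ s) * x ^ s))"
      unfolding B_def by (simp add: sum_distrib_left mult.commute power_mult_distrib algebra_simps)
    also have "(\<Sum>x\<in>UNIV. psi ((1 - c ^ s) * x ^ s)) = (\<Sum>x\<in>UNIV. psi ((1 - c ^ s) * x))"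
      using sum_pow_reindex[OF assms, of "\<lambda>t. psi ((1 - c ^ s) * t)"] by simp
    also have "\<dots> = (if c = 1 then ?q else 0)"
    proof -
      have "c ^ s = 1 \<longleftrightarrow> c = 1"
        using pow_bij[OF assms] by (metis bij_is_inj inj_eq power_one)
      thus ?thesis by (simp add: psi_sum_mult)
    qed
    finally show "(\<Sum>y\<in>UNIV - {0::'a}. W s (c * y) * cnj (W s y))
              = (if c = 1 then of_nat (CARD('a) ^ 2) else 0)"
      by (simp add: power2_eq_square)
  qed
qed

end
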